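(* Let $G$ be a proper interval graph on vertex set $[n]$, labeled so that for all $i<j$, $\{i,j\}\in E(G)$ implies the induced subgraph on $\{i,\dots,j\}$ is a clique, and let $t\ge2$, $I=I_t(G)$. Then $I$ satisfies the $\ell$-exchange property with respect to the sorting order, namely: let $u_1,\dots,u_N$ and $v_1,\dots,v_N$ be elements of $\mathcal{G}(I)$ such that $(u_i,u_j)$ and $(v_i,v_j)$ are sorted pairs for all $i<j$, and suppose that for some $q\le n-1$ one has $\deg_{x_r}(u_1\cdots u_N)=\deg_{x_r}(v_1\cdots v_N)$ for $r=1,\dots,q-1$ and $\deg_{x_q}(u_1\cdots u_N)<\deg_{x_q}(v_1\cdots v_N)$. Then there exist an index $k$ and an integer $j$ with $q<j\le n$ and $x_j\in\mathrm{supp}(u_k)$ such that $x_q u_k/x_j\in I$.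
   Context: $I_t(G)\subset K[x_1,\dots,x_n]$ is the ideal generated by all squarefree monomials $x_{i_1}\cdots x_{i_t}$ with $\{i_1,\dots,i_t\}$ an independent set of $G$; $\mathcal{G}(I)$ is its minimal monomial generating set. For monomials $u,v$ of degree $d$, write $uv=x_{i_1}\cdots x_{i_{2d}}$ with $i_1\le\cdots\le i_{2d}$, and set $\mathrm{sort}(u,v)=(x_{i_1}x_{i_3}\cdots x_{i_{2d-1}},\ x_{i_2}x_{i_4}\cdots x_{i_{2d}})$; $(u,v)$ is a sorted pair if $\mathrm{sort}(u,v)=(u,v)$. (With respect to the sorting order on $T=K[y_u:u\in\mathcal{G}(I)]$, the standard monomials of the toric ideal of $K[u:u\in\mathcal{G}(I)]$ are exactly the products $y_{u_1}\cdots y_{u_N}$ with $(u_i,u_j)$ sorted for all $i<j$, which is the form used above.) A proper interval graph is a graph whose vertices can be assigned real intervals, none properly containing another, such that two vertices are adjacent iff their intervals intersect; such a labeling of the vertices exists for every proper interval graph. *)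

theory Defs
  imports Complex_Main "HOL-Library.Multiset"
begin

text \<open>Monomials in K[x_1..x_n] are represented by their exponent multisets
  over variable indices: a monomial is a nat multiset, x_i corresponds to i.\<close>

definition simple_graph_on :: "nat \<Rightarrow> (nat \<Rightarrow> nat \<Rightarrow> bool) \<Rightarrow> bool" where
  "simple_graph_on n adj \<longleftrightarrow>
     (\<forall>i j. adj i j \<longrightarrow> adj j i) \<and> (\<forall>i. \<not> adj i i) \<and>
     (\<forall>i j. adj i j \<longrightarrow> i \<in> {1..n} \<and> j \<in> {1..n})"

definition proper_interval_graph :: "nat \<Rightarrow> (nat \<Rightarrow> nat \<Rightarrow> bool) \<Rightarrow> bool" where
  "proper_interval_graph n adj \<longleftrightarrow>
     (\<exists>a b :: nat \<Rightarrow> real.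
        (\<forall>i\<in>{1..n}. a i \<le> b i) \<and>
        (\<forall>i\<in>{1..n}. \<forall>j\<in>{1..n}. \<not> ({a i..b i} \<subset> {a j..b j})) \<and>
        (\<forall>i\<in>{1..n}. \<forall>j\<in>{1..n}. i \<noteq> j \<longrightarrow>
            (adj i j \<longleftrightarrow> {a i..b i} \<inter> {a j..b j} \<noteq> {})))"

definition proper_interval_labeling :: "nat \<Rightarrow> (nat \<Rightarrow> nat \<Rightarrow> bool) \<Rightarrow> bool" where
  "proper_interval_labeling n adj \<longleftrightarrow>
     (\<forall>i\<in>{1..n}. \<forall>j\<in>{1..n}. i < j \<longrightarrow> adj i j \<longrightarrow>
        (\<forall>k\<in>{i..j}. \<forall>l\<in>{i..j}. k \<noteq> l \<longrightarrow> adj k l))"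

definition independent_set :: "nat \<Rightarrow> (nat \<Rightarrow> nat \<Rightarrow> bool) \<Rightarrow> nat set \<Rightarrow> bool" where
  "independent_set n adj S \<longleftrightarrow> S \<subseteq> {1..n} \<and> (\<forall>i\<in>S. \<forall>j\<in>S. \<not> adj i j)"

definition gens_It :: "nat \<Rightarrow> (nat \<Rightarrow> nat \<Rightarrow> bool) \<Rightarrow> nat \<Rightarrow> nat multiset set" where
  "gens_It n adj t = {mset_set S | S. independent_set n adj S \<and> card S = t}"

definition in_It :: "nat \<Rightarrow> (nat \<Rightarrow> nat \<Rightarrow> bool) \<Rightarrow> nat \<Rightarrow> nat multiset \<Rightarrow> bool" where
  "in_It n adj t w \<longleftrightarrow> (\<exists>g\<in>gens_It n adj t. g \<subseteq># w)"

text \<open>sort(u,v): sort the variables of uv and split into odd/even positions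
  (positions 1,3,5,... are list indices 0,2,4,...).\<close>
definition sort_pair :: "nat multiset \<Rightarrow> nat multiset \<Rightarrow> nat multiset \<times> nat multiset" where
  "sort_pair u v = (let xs = sorted_list_of_multiset (u + v) in
     (mset (nths xs {i. even i}), mset (nths xs {i. odd i})))"

definition sorted_pair :: "nat multiset \<Rightarrow> nat multiset \<Rightarrow> bool" where
  "sorted_pair u v \<longleftrightarrow> sort_pair u v = (u, v)"

end

theory Submission
  imports Defs
begin

definition cnt :: "nat \<Rightarrow> nat multiset \<Rightarrow> nat" where
  "cnt c M = size (filter_mset (\<lambda>x. x < c) M)"

lemma cnt_mset: "cnt c (mset ys) = length (filter (\<lambda>x. x < c) ys)"
  unfolding cnt_def by (metis mset_filter size_mset)

lemma nths_filter_count: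
  "sorted xs \<Longrightarrow>
    length (filter (\<lambda>x. x < c) (nths xs {i. even i})) = (length (filter (\<lambda>x. x < c) xs) + 1) div 2 \<and>
    length (filter (\<lambda>x. x < c) (nths xs {i. odd i})) = length (filter (\<lambda>x. x < c) xs) div 2"
proof (induction xs)
  case Nil
  then show ?case by simp
next
  case (Cons x xs)
  have e: "{j. Suc j \<in> {i::nat. even i}} = {i. odd i}" "{j. Suc j \<in> {i::nat. odd i}} = {i. even i}" by auto
  show ?case
  proof (cases "x < c")
    case True
    then show ?thesis using Cons by (simp add: nths_Cons e)
  next
    case False
    have all: "\<forall>y\<in>set xs. \<not> y < c" using Cons.prems False by auto
    have "\<And>A. filter (\<lambda>x. x < c) (nths xs A) = []"
      using all by (auto simp: filter_empty_conv dest: set_nths_subset[THEN subsetD])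
    moreover have "filter (\<lambda>x. x < c) xs = []" using all by (auto simp: filter_empty_conv)
    ultimately show ?thesis using False by (simp add: nths_Cons e)
  qed
qed

lemma sorted_pair_cnt:
  assumes "sorted_pair u v"
  shows "cnt c v \<le> cnt c u \<and> cnt c u \<le> cnt c v + 1"
proof -
  define xs where "xs = sorted_list_of_multiset (u + v)"
  have u: "u = mset (nths xs {i. even i})" and v: "v = mset (nths xs {i. odd i})"
    using assms unfolding sorted_pair_def sort_pair_def xs_def Let_def by auto
  have "sorted xs" unfolding xs_def by simp
  from nths_filter_count[OF this, of c] show ?thesis
    unfolding u v cnt_mset by auto
qed

lemma family_div:
  fixes f :: "nat \<Rightarrow> nat"
  assumes p: "\<forall>i j. i < j \<and> j < N \<longrightarrow> f j \<le> f i \<and> f i \<le> f j + 1" and k: "k < N"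
  shows "f k = (sum f {..<N} + N - 1 - k) div N"
proof -
  have a: "f k \<le> f i + (if k < i then 1 else 0)" if "i < N" for i
    using p that k by (cases "i < k"; cases "k < i") auto
  have b: "f i \<le> f k + (if i < k then 1 else 0)" if "i < N" for i
    using p that k by (cases "i < k"; cases "k < i") auto
  have "(\<Sum>i<N. f k) \<le> (\<Sum>i<N. f i + (if k < i then 1 else 0))"
    by (rule sum_mono) (use a in auto)
  also have "\<dots> = sum f {..<N} + card {i. i < N \<and> k < i}"
    by (simp add: sum.distrib sum.If_cases Int_def conj_commute)
  also have "{i. i < N \<and> k < i} = {k<..<N}" by auto
  finally have lo: "N * f k \<le> sum f {..<N} + (N - 1 - k)" by simp
  have "sum f {..<N} \<le> (\<Sum>i<N. f k + (if i < k then 1 else 0))"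
    by (rule sum_mono) (use b in auto)
  also have "\<dots> = N * f k + card {i. i < N \<and> i < k}"
    by (simp add: sum.distrib sum.If_cases Int_def conj_commute)
  also have "{i. i < N \<and> i < k} = {..<k}" using k by auto
  finally have hi: "sum f {..<N} \<le> N * f k + k" by simp
  have lo2: "N * f k \<le> sum f {..<N} + N - 1 - k" using lo k by linarith
  have hi2: "sum f {..<N} + N - 1 - k < N * Suc (f k)" using hi k by simp
  have "(sum f {..<N} + N - 1 - k) div N = f k"
    by (rule div_nat_eqI[OF lo2 hi2])
  then show ?thesis by (rule sym)
qed

lemma cnt_sum_list: "cnt c (sum_list xs) = (\<Sum>i<length xs. cnt c (xs ! i))"
proof -
  have "cnt c (sum_list xs) = sum_list (map (cnt c) xs)"
    by (induction xs) (auto simp: cnt_def)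
  then show ?thesis by (simp add: sum_list_sum_nth atLeast0LessThan)
qed

lemma count_sum_list: "count (sum_list xs) r = (\<Sum>i<length xs. count (xs ! i) r)"
proof -
  have "count (sum_list xs) r = sum_list (map (\<lambda>M. count M r) xs)"
    by (induction xs) auto
  then show ?thesis by (simp add: sum_list_sum_nth atLeast0LessThan)
qed

lemma cnt_Suc: "cnt (Suc r) M = cnt r M + count M r"
proof -
  have "filter_mset (\<lambda>x. x < Suc r) M = filter_mset (\<lambda>x. x < r) M + replicate_mset (count M r) r"
    by (rule multiset_eqI) auto
  then show ?thesis unfolding cnt_def by simp
qed

lemma gen_set:
  assumes "M \<in> gens_It n adj t"
  obtains U where "M = mset_set U" "independent_set n adj U" "card U = t" "finite U" "U \<subseteq> {1..n}"
  using assms unfolding gens_It_def independent_set_def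
  by (auto intro: finite_subset)

theorem proposition2p4:
  fixes n t q N :: nat and adj :: "nat \<Rightarrow> nat \<Rightarrow> bool"
    and us vs :: "nat multiset list"
  assumes graph: "simple_graph_on n adj"
    and pig: "proper_interval_graph n adj"
    and lab: "proper_interval_labeling n adj"
    and t2: "t \<ge> 2"
    and len: "length us = N" "length vs = N"
    and ugen: "\<forall>i<N. us ! i \<in> gens_It n adj t"
    and vgen: "\<forall>i<N. vs ! i \<in> gens_It n adj t"
    and usort: "\<forall>i j. i < j \<and> j < N \<longrightarrow> sorted_pair (us ! i) (us ! j)"
    and vsort: "\<forall>i j. i < j \<and> j < N \<longrightarrow> sorted_pair (vs ! i) (vs ! j)"
    and q: "1 \<le> q" "q \<le> n - 1"
    and eqdeg: "\<forall>r. 1 \<le> r \<and> r < q \<longrightarrow> count (sum_list us) r = count (sum_list vs) r"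
    and ltdeg: "count (sum_list us) q < count (sum_list vs) q"
  shows "\<exists>k<N. \<exists>j. q < j \<and> j \<le> n \<and> j \<in># us ! k \<and>
           in_It n adj t (us ! k - {#j#} + {#q#})"
proof -
  have zero: "count (xs ! i) 0 = 0" if "\<forall>i<N. xs ! i \<in> gens_It n adj t" "i < N" for xs i
  proof -
    have "xs ! i \<in> gens_It n adj t" using that by blast
    then obtain U where "xs ! i = mset_set U" "independent_set n adj U" "card U = t" "finite U" "U \<subseteq> {1..n}"
      by (rule gen_set)
    then show ?thesis by (auto simp: count_mset_set')
  qed
  have cnt_eq: "cnt c (us ! k) = cnt c (vs ! k)" if "c \<le> q" "k < N" for c k
  proof -
    have "cnt c (sum_list us) = cnt c (sum_list vs)"
    proof -
      have "filter_mset (\<lambda>x. x < c) (sum_list us) = filter_mset (\<lambda>x. x < c) (sum_list vs)"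
      proof (rule multiset_eqI)
        fix r
        show "count (filter_mset (\<lambda>x. x < c) (sum_list us)) r = count (filter_mset (\<lambda>x. x < c) (sum_list vs)) r"
        proof (cases "r < c")
          case True
          show ?thesis
          proof (cases "r = 0")
            case True
            have "(\<Sum>i<N. count (us ! i) 0) = 0"
              by (rule sum.neutral) (use zero[OF ugen] in auto)
            moreover have "(\<Sum>i<N. count (vs ! i) 0) = 0"
              by (rule sum.neutral) (use zero[OF vgen] in auto)
            ultimately show ?thesis using True len by (simp add: count_sum_list)
          next
            case False
            then have "1 \<le> r" "r < q" using \<open>r < c\<close> that(1) by auto
            then have "count (sum_list us) r = count (sum_list vs) r" using eqdeg by blast
            then show ?thesis by simp
          qed
        qed simp
      qed
      then show ?thesis unfolding cnt_def by simp
    qed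
    then have S: "sum (\<lambda>i. cnt c (us ! i)) {..<N} = sum (\<lambda>i. cnt c (vs ! i)) {..<N}"
      using len by (simp add: cnt_sum_list)
    have pu: "\<forall>i j. i < j \<and> j < N \<longrightarrow> cnt c (us ! j) \<le> cnt c (us ! i) \<and> cnt c (us ! i) \<le> cnt c (us ! j) + 1"
    proof (intro allI impI)
      fix i j assume "i < j \<and> j < N"
      then have "sorted_pair (us ! i) (us ! j)" using usort by blast
      from sorted_pair_cnt[OF this] show "cnt c (us ! j) \<le> cnt c (us ! i) \<and> cnt c (us ! i) \<le> cnt c (us ! j) + 1" .
    qed
    have pv: "\<forall>i j. i < j \<and> j < N \<longrightarrow> cnt c (vs ! j) \<le> cnt c (vs ! i) \<and> cnt c (vs ! i) \<le> cnt c (vs ! j) + 1"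
    proof (intro allI impI)
      fix i j assume "i < j \<and> j < N"
      then have "sorted_pair (vs ! i) (vs ! j)" using vsort by blast
      from sorted_pair_cnt[OF this] show "cnt c (vs ! j) \<le> cnt c (vs ! i) \<and> cnt c (vs ! i) \<le> cnt c (vs ! j) + 1" .
    qed
    show ?thesis
      using family_div[OF pu \<open>k < N\<close>] family_div[OF pv \<open>k < N\<close>] S by simp
  qed
  have ceq: "count (us ! k) r = count (vs ! k) r" if "r < q" "k < N" for r k
    using cnt_eq[of "Suc r" k] cnt_eq[of r k] that cnt_Suc[of r] by simp
  obtain k where k: "k < N" "count (us ! k) q < count (vs ! k) q"
  proof -
    have "\<exists>k<N. count (us ! k) q < count (vs ! k) q"
    proof (rule ccontr)
      assume "\<not> ?thesis"
      then have H: "count (vs ! i) q \<le> count (us ! i) q" if "i < N" for i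
        using that not_less by blast
      have "(\<Sum>i<N. count (vs ! i) q) \<le> (\<Sum>i<N. count (us ! i) q)"
        by (rule sum_mono) (use H in simp)
      then show False using ltdeg len by (simp add: count_sum_list)
    qed
    then show ?thesis using that by blast
  qed
  have "us ! k \<in> gens_It n adj t" using ugen k(1) by blast
  then obtain U where U: "us ! k = mset_set U" "independent_set n adj U" "card U = t" "finite U" "U \<subseteq> {1..n}"
    by (rule gen_set)
  have "vs ! k \<in> gens_It n adj t" using vgen k(1) by blast
  then obtain V where V: "vs ! k = mset_set V" "independent_set n adj V" "card V = t" "finite V" "V \<subseteq> {1..n}"
    by (rule gen_set)
  have qV: "q \<in> V" and qU: "q \<notin> U" using k U V by (auto simp: count_mset_set' split: if_splits)
  have UVlow: "x \<in> U \<longleftrightarrow> x \<in> V" if "x < q" for x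
    using ceq[OF that k(1)] U(1,4) V(1,4) by (simp add: count_mset_set' split: if_splits)
  have "\<exists>x\<in>U. q < x"
  proof (rule ccontr)
    assume "\<not> ?thesis"
    then have "U \<subseteq> V - {q}" using UVlow qU by (metis DiffI linorder_neqE_nat singletonD subsetI)
    then have "card U \<le> card (V - {q})" using V by (intro card_mono) auto
    then show False using U V qV t2 by simp
  qed
  define j where "j = Min {x\<in>U. q < x}"
  have jU: "j \<in> U" and qj: "q < j" and jmin: "\<And>x. x \<in> U \<Longrightarrow> q < x \<Longrightarrow> j \<le> x"
    using \<open>\<exists>x\<in>U. q < x\<close> U(4) unfolding j_def
    by (auto intro: Min_le) (metis (mono_tags, lifting) Min_in empty_iff finite_subset mem_Collect_eq subsetI)+
  have jn: "j \<le> n" using jU U by auto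
  define W where "W = insert q (U - {j})"
  have sym: "\<And>a b. adj a b \<Longrightarrow> adj b a" and irr: "\<And>a. \<not> adj a a"
    using graph unfolding simple_graph_on_def by auto
  have Uind: "\<And>a b. a \<in> U \<Longrightarrow> b \<in> U \<Longrightarrow> \<not> adj a b" using U(2) unfolding independent_set_def by auto
  have Vind: "\<And>a b. a \<in> V \<Longrightarrow> b \<in> V \<Longrightarrow> \<not> adj a b" using V(2) unfolding independent_set_def by auto
  have qy: "\<not> adj q y" if "y \<in> U - {j}" for y
  proof (cases "y < q")
    case True
    then show ?thesis using UVlow[OF True] that qV Vind by auto
  next
    case False
    then have "q < y" using that qU by (cases "y = q") auto
    then have "j < y" using jmin[of y] that by auto
    show ?thesis
    proof
      assume "adj q y"
      have "q \<in> {1..n}" "y \<in> {1..n}" using q that U(5) jn \<open>q < y\<close> by auto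
      then have "adj j y" using lab \<open>adj q y\<close> \<open>q < y\<close> \<open>q < j\<close> \<open>j < y\<close>
        unfolding proper_interval_labeling_def by fastforce
      then show False using Uind jU that by auto
    qed
  qed
  have qy': "\<not> adj y q" if "y \<in> U - {j}" for y
    using qy[OF that] sym by blast
  have Wind: "independent_set n adj W"
    unfolding independent_set_def W_def
    using U(5) q jn qj irr qy qy' Uind by auto
  have Wcard: "card W = t" unfolding W_def using U(3,4) jU qU t2 by (simp add: card_Diff_singleton)
  have "us ! k - {#j#} + {#q#} = mset_set W"
    unfolding W_def U(1) using U(4) jU qU by (simp add: mset_set_Diff)
  then have II: "in_It n adj t (us ! k - {#j#} + {#q#})"
    unfolding in_It_def gens_It_def using Wind Wcard by auto
  have "j \<in># us ! k" using jU U(1,4) by simp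
  then show ?thesis using k(1) qj jn II by blast
qed

end
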